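(* The $2$-dimensional Fine $\mathbb{Q}$-codegree spectrum is $$S^F(2)=\left\{\tfrac{2}{k}\;\middle|\;k\in\mathbb{Z}_{>0}\right\}\cup\left\{\tfrac{3}{k}\;\middle|\;k\in\mathbb{Z}_{>0}\right\}.$$
   Context: For a $d$-dimensional rational polytope $P\subseteq\mathbb{R}^d$ and $a\in(\mathbb{Z}^d)^*$ let $h_P(a)=\min_{x\in P}\langle a,x\rangle$. For $s>0$ the Fine adjoint polytope is $P^{F(s)}=\{x\in\mathbb{R}^d : \langle a,x\rangle\ge h_P(a)+s \text{ for all } a\in(\mathbb{Z}^d)^*\setminus\{0\}\}$. The Fine $\mathbb{Q}$-codegree is $\mu^F(P)=(\sup\{s>0 : P^{F(s)}\neq\emptyset\})^{-1}$. The Fine spectrum in dimension $d$ is $S^F(d)=\{\mu^F(P) : P \text{ a } d\text{-dimensional lattice polytope}\}$, lattice polytopes being those with vertices in $\mathbb{Z}^d$. *)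

theory Defs
  imports "HOL-Analysis.Analysis"
begin

text \<open>Points of R^d are vectors of type real^'n (d = CARD('n)); the dual lattice
  (Z^d)* is identified with the integer vectors, paired via the inner product.\<close>

definition lattice_point :: "real^'n \<Rightarrow> bool" where
  "lattice_point x \<longleftrightarrow> (\<forall>i. x $ i \<in> \<int>)"

definition lattice_polytope :: "(real^'n) set \<Rightarrow> bool" where
  "lattice_polytope P \<longleftrightarrow>
     (\<exists>V. finite V \<and> V \<noteq> {} \<and> (\<forall>v\<in>V. lattice_point v) \<and> P = convex hull V)"

definition support_min :: "(real^'n) set \<Rightarrow> real^'n \<Rightarrow> real" where
  "support_min P a = Inf ((\<lambda>x. a \<bullet> x) ` P)"

definition fine_adjoint :: "(real^'n) set \<Rightarrow> real \<Rightarrow> (real^'n) set" where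
  "fine_adjoint P s = {x. \<forall>a. lattice_point a \<and> a \<noteq> 0 \<longrightarrow> a \<bullet> x \<ge> support_min P a + s}"

definition fine_codegree :: "(real^'n) set \<Rightarrow> real" where
  "fine_codegree P = inverse (Sup {s. s > 0 \<and> fine_adjoint P s \<noteq> {}})"

definition fine_spectrum :: "'n::finite itself \<Rightarrow> real set" where
  "fine_spectrum (_ :: 'n itself) =
     {fine_codegree P | P :: (real^'n) set. lattice_polytope P \<and> aff_dim P = int CARD('n)}"

end

theory Submission
  imports Defs
begin

lemma inner2: "(a::real^2) \<bullet> b = a$1 * b$1 + a$2 * b$2"
  by (simp add: inner_vec_def sum_2)

definition det2 :: "real^2 \<Rightarrow> real^2 \<Rightarrow> real" where
  "det2 a b = a$1 * b$2 - a$2 * b$1"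

lemma vec2_eq: "(a::real^2) = b \<longleftrightarrow> a$1 = b$1 \<and> a$2 = b$2"
  by (metis (mono_tags) exhaust_2 vec_eq_iff)

lemma lattice_point2: "lattice_point (a::real^2) \<longleftrightarrow> a$1 \<in> \<int> \<and> a$2 \<in> \<int>"
  by (simp add: lattice_point_def forall_2)

lemma support_min_hull:
  fixes V :: "(real^'n) set"
  assumes "finite V" "V \<noteq> {}"
  shows "\<exists>v\<in>V. support_min (convex hull V) a = a \<bullet> v"
    and "\<forall>y\<in>convex hull V. support_min (convex hull V) a \<le> a \<bullet> y"
proof -
  obtain v0 where v0: "v0 \<in> V" "\<forall>v\<in>V. a \<bullet> v0 \<le> a \<bullet> v"
    using assms by (metis (no_types, lifting) finite_imageI Min_in Min_le empty_is_image imageE image_eqI)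
  have low: "\<forall>y\<in>convex hull V. a \<bullet> v0 \<le> a \<bullet> y"
  proof -
    have "convex hull V \<subseteq> {y. a \<bullet> v0 \<le> a \<bullet> y}"
      by (rule hull_minimal) (use v0 convex_halfspace_ge[of "a \<bullet> v0" a] in \<open>auto simp: inner_commute\<close>)
    then show ?thesis by auto
  qed
  have eq: "support_min (convex hull V) a = a \<bullet> v0"
    unfolding support_min_def
    by (rule cInf_eq_minimum) (use v0 low hull_inc[of v0 V] in auto)
  show "\<exists>v\<in>V. support_min (convex hull V) a = a \<bullet> v" using eq v0 by blast
  show "\<forall>y\<in>convex hull V. support_min (convex hull V) a \<le> a \<bullet> y" using eq low by simp
qed


lemma det2_int: "lattice_point (a::real^2) \<Longrightarrow> lattice_point b \<Longrightarrow> det2 a b \<in> \<int>"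
  by (simp add: det2_def lattice_point2)

lemma indep2:
  fixes a b :: "real^2"
  assumes "det2 a b \<noteq> 0" "\<alpha> *\<^sub>R a + \<beta> *\<^sub>R b = 0"
  shows "\<alpha> = 0 \<and> \<beta> = 0"
proof -
  have e1: "\<alpha> * a$1 + \<beta> * b$1 = 0" "\<alpha> * a$2 + \<beta> * b$2 = 0"
    using assms(2) by (simp_all add: vec2_eq)
  have "\<alpha> * det2 a b = 0"
  proof -
    have "\<alpha> * det2 a b = (\<alpha> * a$1 + \<beta> * b$1) * b$2 - (\<alpha> * a$2 + \<beta> * b$2) * b$1"
      by (simp add: det2_def algebra_simps)
    then show ?thesis using e1 by simp
  qed
  moreover have "\<beta> * det2 a b = 0"
  proof -
    have "\<beta> * det2 a b = a$1 * (\<alpha> * a$2 + \<beta> * b$2) - a$2 * (\<alpha> * a$1 + \<beta> * b$1)"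
      by (simp add: det2_def algebra_simps)
    then show ?thesis using e1 by simp
  qed
  ultimately show ?thesis using assms(1) by simp
qed

lemma cramer2_aux: "det2 a b *\<^sub>R e = det2 e b *\<^sub>R a + det2 a e *\<^sub>R b"
  unfolding vec2_eq det2_def by (simp add: algebra_simps)

lemma cramer2:
  assumes "det2 a b \<noteq> 0"
  shows "e = (det2 e b / det2 a b) *\<^sub>R a + (det2 a e / det2 a b) *\<^sub>R b"
proof -
  have "e = (1 / det2 a b) *\<^sub>R (det2 a b *\<^sub>R e)" using assms by simp
  also have "\<dots> = (det2 e b / det2 a b) *\<^sub>R a + (det2 a e / det2 a b) *\<^sub>R b"
    by (subst cramer2_aux[of a b e]) (simp add: scaleR_add_right)
  finally show ?thesis .
qed

lemma lattice_comb:
  fixes a b :: "real^2"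
  assumes "lattice_point a" "lattice_point b" "x \<in> \<int>" "y \<in> \<int>"
  shows "lattice_point (x *\<^sub>R a + y *\<^sub>R b)"
  using assms by (simp add: lattice_point2)

lemma lattice_diff: "lattice_point (a::real^2) \<Longrightarrow> lattice_point b \<Longrightarrow> lattice_point (a - b)"
  by (simp add: lattice_point2)

lemma lattice_e1: "lattice_point (vector [1, 0] :: real^2)"
  and lattice_e2: "lattice_point (vector [0, 1] :: real^2)"
  by (simp_all add: lattice_point2)

lemma frac_lattice:
  fixes a b e :: "real^2"
  assumes "lattice_point a" "lattice_point b" "lattice_point e"
    and "e = p *\<^sub>R a + q *\<^sub>R b"
  shows "lattice_point (frac p *\<^sub>R a + frac q *\<^sub>R b)"
proof -
  have "frac p *\<^sub>R a + frac q *\<^sub>R b = e - (of_int \<lfloor>p\<rfloor> *\<^sub>R a + of_int \<lfloor>q\<rfloor> *\<^sub>R b)"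
    using assms(4) by (simp add: frac_def algebra_simps)
  moreover have "lattice_point (of_int \<lfloor>p\<rfloor> *\<^sub>R a + of_int \<lfloor>q\<rfloor> *\<^sub>R b)"
    by (rule lattice_comb) (use assms in auto)
  ultimately show ?thesis using assms(3) lattice_diff by metis
qed

lemma int_prod_ge2:
  assumes "k \<in> \<int>" "(d::real) \<ge> 2" "k * d = 1"
  shows False
proof -
  obtain n where n: "k = of_int n" using assms(1) Ints_cases by blast
  consider "n = 0" | "n \<ge> 1" | "n \<le> -1" by linarith
  then show False
  proof cases
    case 1 then show ?thesis using assms n by simp
  next
    case 2 then have "k \<ge> 1" using n by simp
    then have "1 * 2 \<le> k * d" using assms(2) by (intro mult_mono) auto
    then show ?thesis using assms by simp
  next
    case 3 then have "k \<le> -1" using n by simp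
    then have "1 * 2 \<le> (-k) * d" using assms(2) by (intro mult_mono) auto
    then show ?thesis using assms by simp
  qed
qed

lemma par_point:
  assumes "lattice_point a" "lattice_point b" "det2 a b \<ge> 2"
  shows "\<exists>\<alpha> \<beta>. 0 \<le> \<alpha> \<and> \<alpha> < 1 \<and> 0 \<le> \<beta> \<and> \<beta> < 1 \<and>
           lattice_point (\<alpha> *\<^sub>R a + \<beta> *\<^sub>R b) \<and> \<alpha> *\<^sub>R a + \<beta> *\<^sub>R b \<noteq> 0"
proof (rule ccontr)
  assume H: "\<not> ?thesis"
  define d where "d = det2 a b"
  have d0: "d \<noteq> 0" using assms d_def by simp
  have key: "\<And>e::real^2. lattice_point e \<Longrightarrow> det2 e b / d \<in> \<int> \<and> det2 a e / d \<in> \<int>"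
  proof -
    fix e :: "real^2" assume e: "lattice_point e"
    define p where "p = det2 e b / d"
    define q where "q = det2 a e / d"
    have eq: "e = p *\<^sub>R a + q *\<^sub>R b" using cramer2[OF d0[unfolded d_def]] p_def q_def d_def by blast
    have lat: "lattice_point (frac p *\<^sub>R a + frac q *\<^sub>R b)"
      using frac_lattice[OF assms(1,2) e eq] .
    have "frac p *\<^sub>R a + frac q *\<^sub>R b = 0"
      using H lat frac_ge_0 frac_lt_1 by blast
    then have "frac p = 0 \<and> frac q = 0" using indep2 d0 d_def by blast
    then show "det2 e b / d \<in> \<int> \<and> det2 a e / d \<in> \<int>"
      using p_def q_def frac_eq_0_iff by blast
  qed
  define e1 :: "real^2" where "e1 = vector [1, 0]"
  define e2 :: "real^2" where "e2 = vector [0, 1]"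
  have k1: "det2 e1 b / d \<in> \<int>" "det2 a e1 / d \<in> \<int>" using key lattice_e1 e1_def by blast+
  have k2: "det2 e2 b / d \<in> \<int>" "det2 a e2 / d \<in> \<int>" using key lattice_e2 e2_def by blast+
  have dd: "det2 e1 b = b$2" "det2 a e2 = a$1" "det2 a e1 = - a$2" "det2 e2 b = - b$1"
    unfolding e1_def e2_def det2_def by simp_all
  have "((det2 e1 b / d) * (det2 a e2 / d) - (det2 a e1 / d) * (det2 e2 b / d)) * d
        = (a$1 * b$2 - a$2 * b$1) / d"
    unfolding dd using d0 by (simp add: field_simps power2_eq_square)
  also have "\<dots> = 1" using d0 unfolding d_def det2_def by simp
  finally have "((det2 e1 b / d) * (det2 a e2 / d) - (det2 a e1 / d) * (det2 e2 b / d)) * d = 1" .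
  moreover have "(det2 e1 b / d) * (det2 a e2 / d) - (det2 a e1 / d) * (det2 e2 b / d) \<in> \<int>"
    using k1 k2 by (metis Ints_diff Ints_mult)
  ultimately show False using int_prod_ge2 assms(3) d_def by blast
qed


definition inN :: "real \<Rightarrow> real^2 \<Rightarrow> bool" where
  "inN R a \<longleftrightarrow> lattice_point a \<and> a \<noteq> 0 \<and> \<bar>a$1\<bar> \<le> R \<and> \<bar>a$2\<bar> \<le> R"

lemma det2_lin_left: "det2 (x *\<^sub>R a + y *\<^sub>R b) c = x * det2 a c + y * det2 b c"
  by (simp add: det2_def algebra_simps)
lemma det2_lin_right: "det2 c (x *\<^sub>R a + y *\<^sub>R b) = x * det2 c a + y * det2 c b"
  by (simp add: det2_def algebra_simps)
lemma det2_anti: "det2 a b = - det2 b a"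
  by (simp add: det2_def)
lemma det2_self: "det2 a a = 0"
  by (simp add: det2_def)
lemma det2_identity: "det2 a2 a3 *\<^sub>R a1 + det2 a3 a1 *\<^sub>R a2 + det2 a1 a2 *\<^sub>R a3 = 0"
  unfolding vec2_eq det2_def by (simp add: algebra_simps)

lemma inN_neg: "inN R a \<Longrightarrow> inN R (-a)"
  by (simp add: inN_def lattice_point2)

lemma inN_comb:
  assumes "inN R a" "inN R b" "0 \<le> \<alpha>" "0 \<le> \<beta>" "\<alpha> + \<beta> \<le> 1"
    and "lattice_point (\<alpha> *\<^sub>R a + \<beta> *\<^sub>R b)" "\<alpha> *\<^sub>R a + \<beta> *\<^sub>R b \<noteq> 0"
  shows "inN R (\<alpha> *\<^sub>R a + \<beta> *\<^sub>R b)"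
proof -
  have R0: "0 \<le> R" using assms(1) unfolding inN_def by linarith
  have "\<bar>\<alpha> * a$i + \<beta> * b$i\<bar> \<le> R" for i
  proof -
    have "\<bar>\<alpha> * a$i + \<beta> * b$i\<bar> \<le> \<alpha> * \<bar>a$i\<bar> + \<beta> * \<bar>b$i\<bar>"
      using assms(3,4) by (simp add: abs_mult order_trans[OF abs_triangle_ineq])
    also have "\<dots> \<le> \<alpha> * R + \<beta> * R"
    proof -
      have "\<forall>i. \<bar>a$i\<bar> \<le> R" "\<forall>i. \<bar>b$i\<bar> \<le> R" using assms(1,2) unfolding inN_def
        by (simp_all add: forall_2)
      then have "\<bar>a$i\<bar> \<le> R" "\<bar>b$i\<bar> \<le> R" by blast+
      then show ?thesis using assms(3,4) by (simp add: add_mono mult_left_mono)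
    qed
    also have "\<dots> = (\<alpha> + \<beta>) * R" by (simp add: algebra_simps)
    also have "\<dots> \<le> 1 * R" using mult_right_mono[OF assms(5) R0] .
    finally show ?thesis by simp
  qed
  then show ?thesis using assms(6,7) unfolding inN_def by simp
qed

locale comb =
  fixes H :: "real^2 \<Rightarrow> real" and s R :: real
  assumes hom: "0 \<le> t \<Longrightarrow> H (t *\<^sub>R a) = t * H a"
    and sub: "H (a + b) \<le> H a + H b"
    and spos: "0 < s"
    and low: "inN R a \<Longrightarrow> s \<le> H a"
begin

definition act where "act a \<longleftrightarrow> inN R a \<and> H a = s"

definition concl where
  "concl \<longleftrightarrow> (\<exists>u. act u \<and> act (-u)) \<or> (\<exists>a b c. act a \<and> act b \<and> act c \<and> a + b + c = 0)"

lemma comb_le: "0 \<le> \<alpha> \<Longrightarrow> 0 \<le> \<beta> \<Longrightarrow> H (\<alpha> *\<^sub>R a + \<beta> *\<^sub>R b) \<le> \<alpha> * H a + \<beta> * H b"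
  using sub[of "\<alpha> *\<^sub>R a" "\<beta> *\<^sub>R b"] hom[of \<alpha> a] hom[of \<beta> b] by simp

lemma step:
  assumes a: "act a1" "act a2" "act a3"
    and d: "0 \<le> det2 a2 a3" "0 \<le> det2 a3 a1" "2 \<le> det2 a1 a2"
  shows "\<exists>b1 b2 b3 \<gamma>. act b1 \<and> act b2 \<and> act b3 \<and> 0 \<le> det2 b2 b3 \<and> 0 \<le> det2 b3 b1 \<and> 0 \<le> det2 b1 b2
           \<and> 0 < \<gamma> \<and> \<gamma> < 1 \<and> det2 b2 b3 + det2 b3 b1 + det2 b1 b2 = \<gamma> * (det2 a2 a3 + det2 a3 a1 + det2 a1 a2)"
proof -
  define d1 where "d1 = det2 a2 a3"
  define d2 where "d2 = det2 a3 a1"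
  define d3 where "d3 = det2 a1 a2"
  have in1: "inN R a1" and in2: "inN R a2" and in3: "inN R a3" and H1: "H a1 = s" and H2: "H a2 = s" and H3: "H a3 = s"
    using a unfolding act_def by auto
  have lat1: "lattice_point a1" and lat2: "lattice_point a2" using in1 in2 unfolding inN_def by auto
  obtain \<alpha> \<beta> where ab: "0 \<le> \<alpha>" "\<alpha> < 1" "0 \<le> \<beta>" "\<beta> < 1"
    and clat: "lattice_point (\<alpha> *\<^sub>R a1 + \<beta> *\<^sub>R a2)" and cnz: "\<alpha> *\<^sub>R a1 + \<beta> *\<^sub>R a2 \<noteq> 0"
    using par_point[OF lat1 lat2 d(3)] by blast
  define c where "c = \<alpha> *\<^sub>R a1 + \<beta> *\<^sub>R a2"
  have d3nz: "det2 a1 a2 \<noteq> 0" using d(3) by simp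
  have Hc: "H c \<le> (\<alpha> + \<beta>) * s" using comb_le[OF ab(1,3), of a1 a2] H1 H2 c_def by (simp add: algebra_simps)
  have sum1: "\<alpha> + \<beta> = 1"
  proof (rule ccontr)
    assume ne: "\<alpha> + \<beta> \<noteq> 1"
    show False
    proof (cases "\<alpha> + \<beta> < 1")
      case True
      have "inN R c" using inN_comb[OF in1 in2 ab(1,3)] True clat cnz c_def by simp
      then have "s \<le> H c" by (rule low)
      moreover have "(\<alpha> + \<beta>) * s < s" using True spos by simp
      ultimately show False using Hc by simp
    next
      case False
      then have gt: "\<alpha> + \<beta> > 1" using ne by simp
      define c' where "c' = (1 - \<alpha>) *\<^sub>R a1 + (1 - \<beta>) *\<^sub>R a2"
      have c'eq: "c' = (a1 + a2) - c" unfolding c'_def c_def by (simp add: algebra_simps)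
      have "lattice_point (a1 + a2)" using lat1 lat2 by (simp add: lattice_point2)
      then have c'lat: "lattice_point c'" using c'eq lattice_diff clat c_def by metis
      have c'nz: "c' \<noteq> 0" using indep2[OF d3nz, of "1 - \<alpha>" "1 - \<beta>"] ab c'_def by auto
      have "inN R c'" unfolding c'_def
        by (rule inN_comb[OF in1 in2]) (use ab gt c'lat c'nz c'_def in auto)
      then have "s \<le> H c'" by (rule low)
      moreover have "H c' \<le> ((1 - \<alpha>) + (1 - \<beta>)) * s"
        using comb_le[of "1 - \<alpha>" "1 - \<beta>" a1 a2] ab H1 H2 unfolding c'_def by (simp add: algebra_simps)
      moreover have "((1 - \<alpha>) + (1 - \<beta>)) * s < s"
      proof -
        have "(1 - \<alpha>) + (1 - \<beta>) < 1" using gt by simp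
        from mult_strict_right_mono[OF this spos] show ?thesis by simp
      qed
      ultimately show False by simp
    qed
  qed
  have \<beta>eq: "\<beta> = 1 - \<alpha>" using sum1 by simp
  have \<alpha>pos: "0 < \<alpha>" using sum1 ab by simp
  have inc: "inN R c" using inN_comb[OF in1 in2 ab(1,3)] sum1 clat cnz c_def by simp
  have actc: "act c" unfolding act_def using inc low[OF inc] Hc sum1 by simp
  have dc1: "det2 a3 c = \<alpha> * d2 - \<beta> * d1" unfolding c_def det2_lin_right d1_def d2_def
    using det2_anti[of a3 a2] by simp
  have dc2: "det2 c a2 = \<alpha> * d3" unfolding c_def det2_lin_left d3_def by (simp add: det2_self)
  have dc3: "det2 c a3 = \<beta> * d1 - \<alpha> * d2" unfolding c_def det2_lin_left d1_def d2_def
    using det2_anti[of a1 a3] by simp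
  have dc4: "det2 a1 c = \<beta> * d3" unfolding c_def det2_lin_right d3_def by (simp add: det2_self)
  have d1n: "0 \<le> d1" and d2n: "0 \<le> d2" and d3n: "0 \<le> d3" using d unfolding d1_def d2_def d3_def by auto
  show ?thesis
  proof (cases "\<alpha> * d2 - \<beta> * d1 \<ge> 0")
    case True
    have e1: "0 \<le> det2 a3 c" using dc1 True by simp
    have e2: "0 \<le> det2 c a2" using dc2 \<alpha>pos d3n by simp
    have e3: "det2 a2 a3 + det2 a3 c + det2 c a2 = \<alpha> * (det2 a2 a3 + det2 a3 a1 + det2 a1 a2)"
      unfolding dc1 dc2 d1_def[symmetric] d2_def[symmetric] d3_def[symmetric] \<beta>eq by (simp add: algebra_simps)
    show ?thesis using actc a(2,3) d(1) e1 e2 e3 \<alpha>pos ab(2) by blast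
  next
    case False
    have e1: "0 \<le> det2 c a3" using dc3 False by simp
    have e2: "0 \<le> det2 a1 c" using dc4 ab d3n by simp
    have e3: "det2 c a3 + det2 a3 a1 + det2 a1 c = \<beta> * (det2 a2 a3 + det2 a3 a1 + det2 a1 a2)"
      unfolding dc3 dc4 d1_def[symmetric] d2_def[symmetric] d3_def[symmetric] \<beta>eq by (simp add: algebra_simps)
    have bpos: "0 < \<beta>" "\<beta> < 1" using \<beta>eq \<alpha>pos ab by auto
    show ?thesis using actc a(1,3) d(2) e1 e2 e3 bpos by blast
  qed
qed

end

lemma nat_floor_lt: "x \<in> \<int> \<Longrightarrow> y \<in> \<int> \<Longrightarrow> 0 < x \<Longrightarrow> x < y \<Longrightarrow> nat \<lfloor>x\<rfloor> < nat \<lfloor>y\<rfloor>"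
  by (metis Ints_cases floor_of_int nat_less_eq_zless of_int_less_iff order_less_imp_le of_int_0_less_iff)

lemma int01: "(x::real) \<in> \<int> \<Longrightarrow> 0 \<le> x \<Longrightarrow> x < 2 \<Longrightarrow> x = 0 \<or> x = 1"
proof -
  assume "x \<in> \<int>" "0 \<le> x" "x < 2"
  then obtain n where "x = of_int n" "0 \<le> n" "n < 2" by (metis Ints_cases of_int_0_le_iff of_int_less_iff of_int_numeral)
  then have "n = 0 \<or> n = 1" by linarith
  then show ?thesis using \<open>x = of_int n\<close> by auto
qed

context comb begin

lemma act_nz: "act a \<Longrightarrow> a \<noteq> 0" by (simp add: act_def inN_def)
lemma act_lat: "act a \<Longrightarrow> lattice_point a" by (simp add: act_def inN_def)

lemma concl_pair: "act a \<Longrightarrow> act b \<Longrightarrow> a + b = 0 \<Longrightarrow> concl"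
proof -
  assume "act a" "act b" "a + b = 0"
  then have "b = -a" by (metis add.commute eq_neg_iff_add_eq_0)
  then show concl unfolding concl_def using \<open>act a\<close> \<open>act b\<close> by blast
qed

lemma terminal:
  assumes a: "act a1" "act a2" "act a3"
    and d1: "det2 a2 a3 = 0 \<or> det2 a2 a3 = 1"
    and d2: "det2 a3 a1 = 0 \<or> det2 a3 a1 = 1"
    and d3: "det2 a1 a2 = 0 \<or> det2 a1 a2 = 1"
    and pos: "0 < det2 a2 a3 + det2 a3 a1 + det2 a1 a2"
  shows concl
proof -
  have id: "det2 a2 a3 *\<^sub>R a1 + det2 a3 a1 *\<^sub>R a2 + det2 a1 a2 *\<^sub>R a3 = 0" by (rule det2_identity)
  have nz: "a1 \<noteq> 0" "a2 \<noteq> 0" "a3 \<noteq> 0" using a act_nz by auto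
  show ?thesis
    using d1 d2 d3
  proof (elim disjE)
    assume "det2 a2 a3 = 1" "det2 a3 a1 = 1" "det2 a1 a2 = 1"
    then have "a1 + a2 + a3 = 0" using id by simp
    then show concl unfolding concl_def using a by blast
  next
    assume "det2 a2 a3 = 1" "det2 a3 a1 = 1" "det2 a1 a2 = 0"
    then have "a1 + a2 = 0" using id by simp
    then show concl using concl_pair a by blast
  next
    assume "det2 a2 a3 = 1" "det2 a3 a1 = 0" "det2 a1 a2 = 1"
    then have "a1 + a3 = 0" using id by simp
    then show concl using concl_pair a by blast
  next
    assume "det2 a2 a3 = 0" "det2 a3 a1 = 1" "det2 a1 a2 = 1"
    then have "a2 + a3 = 0" using id by simp
    then show concl using concl_pair a by blast
  qed (use pos id nz in auto)
qed

lemma descent: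
  "act a1 \<Longrightarrow> act a2 \<Longrightarrow> act a3 \<Longrightarrow> 0 \<le> det2 a2 a3 \<Longrightarrow> 0 \<le> det2 a3 a1 \<Longrightarrow> 0 \<le> det2 a1 a2
   \<Longrightarrow> 0 < det2 a2 a3 + det2 a3 a1 + det2 a1 a2 \<Longrightarrow> concl"
proof (induction "nat \<lfloor>det2 a2 a3 + det2 a3 a1 + det2 a1 a2\<rfloor>" arbitrary: a1 a2 a3 rule: less_induct)
  case less
  have intS: "\<And>b1 b2 b3. act b1 \<Longrightarrow> act b2 \<Longrightarrow> act b3 \<Longrightarrow> det2 b2 b3 + det2 b3 b1 + det2 b1 b2 \<in> \<int>"
    using act_lat det2_int by (meson Ints_add)
  have I: "det2 a2 a3 \<in> \<int>" "det2 a3 a1 \<in> \<int>" "det2 a1 a2 \<in> \<int>"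
    using act_lat det2_int less.prems by meson+
  have red: "concl" if st: "\<exists>b1 b2 b3 \<gamma>. act b1 \<and> act b2 \<and> act b3 \<and> 0 \<le> det2 b2 b3 \<and> 0 \<le> det2 b3 b1 \<and> 0 \<le> det2 b1 b2
           \<and> 0 < \<gamma> \<and> \<gamma> < 1 \<and> det2 b2 b3 + det2 b3 b1 + det2 b1 b2 = \<gamma> * (det2 a2 a3 + det2 a3 a1 + det2 a1 a2)"
  proof -
    obtain b1 b2 b3 \<gamma> where b: "act b1" "act b2" "act b3" "0 \<le> det2 b2 b3" "0 \<le> det2 b3 b1" "0 \<le> det2 b1 b2"
      and g: "0 < \<gamma>" "\<gamma> < 1" and eq: "det2 b2 b3 + det2 b3 b1 + det2 b1 b2 = \<gamma> * (det2 a2 a3 + det2 a3 a1 + det2 a1 a2)"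
      using st by blast
    define S where "S = det2 a2 a3 + det2 a3 a1 + det2 a1 a2"
    have Spos: "0 < S" using less.prems S_def by simp
    have lt1: "0 < \<gamma> * S" "\<gamma> * S < S" using g Spos by (auto simp: mult_less_cancel_right2)
    have "nat \<lfloor>det2 b2 b3 + det2 b3 b1 + det2 b1 b2\<rfloor> < nat \<lfloor>S\<rfloor>"
      unfolding eq S_def[symmetric] by (rule nat_floor_lt) (use intS[OF b(1-3)] eq S_def less.prems intS lt1 in auto)
    then show concl using less.hyps[OF _ b] unfolding S_def using b eq lt1 S_def by auto
  qed
  show concl
  proof (cases "2 \<le> det2 a1 a2")
    case True
    show ?thesis by (rule red) (rule step[OF less.prems(1-3) less.prems(4,5) True])
  next
    case F3: False
    show ?thesis
    proof (cases "2 \<le> det2 a2 a3")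
      case True
      from step[OF less.prems(2,3,1) less.prems(5,6) True] show ?thesis
        by (intro red) (auto simp: algebra_simps)
    next
      case F1: False
      show ?thesis
      proof (cases "2 \<le> det2 a3 a1")
        case True
        from step[OF less.prems(3,1,2) less.prems(6,4) True] show ?thesis
          by (intro red) (auto simp: algebra_simps)
      next
        case F2: False
        show ?thesis
          by (rule terminal[OF less.prems(1-3)]) (use int01 I less.prems F1 F2 F3 in \<open>simp_all\<close>)
      qed
    qed
  qed
qed

end

lemma sign3:
  fixes u v w d1 d2 d3 :: real
  assumes "0 \<le> u" "0 \<le> v" "0 \<le> w" "u + v + w = 1"
    and "v * d1 = u * d2" "v * d3 = w * d2" "w * d1 = u * d3"
  shows "(0 \<le> d1 \<and> 0 \<le> d2 \<and> 0 \<le> d3) \<or> (d1 \<le> 0 \<and> d2 \<le> 0 \<and> d3 \<le> 0)"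
proof -
  have gen: "x = 0 \<and> y = 0" if "0 \<le> x" "0 \<le> y" "0 < a" "b < 0" "x * a = y * b" for x y a b :: real
  proof -
    have "0 \<le> x * a" using that(1,3) by simp
    moreover have "y * b \<le> 0" using that(2,4) by (simp add: mult_nonneg_nonpos)
    ultimately have "x * a = 0" "y * b = 0" using that by linarith+
    then show ?thesis using that by simp
  qed
  have h1: "\<not> (0 < d1 \<and> d2 < 0)"
  proof
    assume a: "0 < d1 \<and> d2 < 0"
    then have "v = 0 \<and> u = 0" using gen[of v u d1 d2] assms by simp
    then show False using assms a by simp
  qed
  have h2: "\<not> (0 < d2 \<and> d1 < 0)"
  proof
    assume a: "0 < d2 \<and> d1 < 0"
    then have "u = 0 \<and> v = 0" using gen[of u v d2 d1] assms by simp
    then show False using assms a by simp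
  qed
  have h3: "\<not> (0 < d2 \<and> d3 < 0)"
  proof
    assume a: "0 < d2 \<and> d3 < 0"
    then have "w = 0 \<and> v = 0" using gen[of w v d2 d3] assms by simp
    then show False using assms a by simp
  qed
  have h4: "\<not> (0 < d3 \<and> d2 < 0)"
  proof
    assume a: "0 < d3 \<and> d2 < 0"
    then have "v = 0 \<and> w = 0" using gen[of v w d3 d2] assms by simp
    then show False using assms a by simp
  qed
  have h5: "\<not> (0 < d1 \<and> d3 < 0)"
  proof
    assume a: "0 < d1 \<and> d3 < 0"
    then have "w = 0 \<and> u = 0" using gen[of w u d1 d3] assms by simp
    then show False using assms a by simp
  qed
  have h6: "\<not> (0 < d3 \<and> d1 < 0)"
  proof
    assume a: "0 < d3 \<and> d1 < 0"
    then have "u = 0 \<and> w = 0" using gen[of u w d3 d1] assms by simp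
    then show False using assms a by simp
  qed
  show ?thesis using h1 h2 h3 h4 h5 h6 by linarith
qed

lemma card_le3:
  assumes "finite T" "T \<noteq> {}" "card T \<le> 3"
  shows "\<exists>a b c. T = {a, b, c}"
proof -
  have "card T = 1 \<or> card T = 2 \<or> card T = 3" using assms card_0_eq by fastforce
  then show ?thesis
  proof (elim disjE)
    assume "card T = 1" then obtain a where "T = {a}" by (meson card_1_singletonE)
    then show ?thesis by (intro exI[of _ a]) auto
  next
    assume "card T = 2" then obtain a b where "T = {a, b}" by (meson card_2_iff)
    then show ?thesis by (intro exI[of _ a] exI[of _ b]) auto
  next
    assume "card T = 3" then obtain a b c where "T = {a, b, c}" by (meson card_3_iff)
    then show ?thesis by blast
  qed
qed

context comb begin

lemma pair:
  assumes p: "act p" and q: "act q" and det: "det2 p q = 0" and neg: "p \<bullet> q < 0"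
  shows concl
proof -
  have qnz: "q \<noteq> 0" using q act_nz by blast
  have qq: "0 < q \<bullet> q" using qnz by simp
  have det': "p$1 * q$2 = p$2 * q$1" using det unfolding det2_def by simp
  have c1: "(q$1*q$1+q$2*q$2)*p$1 - (p$1*q$1+p$2*q$2)*q$1 = q$2*(p$1*q$2 - p$2*q$1)"
    by (simp add: algebra_simps)
  have c2: "(q$1*q$1+q$2*q$2)*p$2 - (p$1*q$1+p$2*q$2)*q$2 = q$1*(p$2*q$1 - p$1*q$2)"
    by (simp add: algebra_simps)
  have z: "p$1*q$2 - p$2*q$1 = 0" "p$2*q$1 - p$1*q$2 = 0" using det' by simp_all
  have g1: "(q$1*q$1+q$2*q$2)*p$1 = (p$1*q$1+p$2*q$2)*q$1" using c1[unfolded z(1) mult_zero_right] by linarith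
  have g2: "(q$1*q$1+q$2*q$2)*p$2 = (p$1*q$1+p$2*q$2)*q$2" using c2[unfolded z(2) mult_zero_right] by linarith
  have qp: "(q \<bullet> q) *\<^sub>R p = (p \<bullet> q) *\<^sub>R q"
    unfolding vec2_eq inner2 by (simp only: vector_scaleR_component real_scaleR_def g1 g2 simp_thms)
  have "p = (1 / (q \<bullet> q)) *\<^sub>R ((q \<bullet> q) *\<^sub>R p)" using qq by simp
  also have "\<dots> = (1 / (q \<bullet> q)) *\<^sub>R ((p \<bullet> q) *\<^sub>R q)" unfolding qp ..
  finally have peq0: "p = ((p \<bullet> q) / (q \<bullet> q)) *\<^sub>R q" by simp
  define t where "t = - (p \<bullet> q) / (q \<bullet> q)"
  have tpos: "0 < t" unfolding t_def by (rule divide_pos_pos) (use neg qq in auto)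
  have peq: "p = t *\<^sub>R (- q)" using peq0 unfolding t_def by simp
  have inq: "inN R q" and Hq: "H q = s" and Hp: "H p = s" using p q unfolding act_def by auto
  have inmq: "inN R (-q)" using inN_neg[OF inq] .
  show ?thesis
  proof (cases "t \<in> \<int>")
    case True
    then obtain n where n: "t = of_int n" by (metis Ints_cases)
    have "n \<ge> 1" using tpos n by simp
    then consider "n = 1" | "n \<ge> 2" by linarith
    then show ?thesis
    proof cases
      case 1
      then have "q + p = 0" using peq n by simp
      then show ?thesis using concl_pair q p by blast
    next
      case 2
      then have t2: "2 \<le> t" using n by simp
      have "H p = t * H (-q)" using hom[of t "-q"] tpos unfolding peq by simp
      moreover have "s \<le> H (-q)" using low[OF inmq] .
      ultimately have "t * s \<le> H p" using tpos by (simp add: mult_left_mono)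
      moreover have "2 * s \<le> t * s" using t2 spos by (simp add: mult_right_mono)
      ultimately show ?thesis using Hp spos by simp
    qed
  next
    case False
    define k where "k = \<lceil>t\<rceil>"
    define lam where "lam = of_int k - t"
    have l0: "0 < lam" unfolding lam_def k_def using False
      by (metis Ints_of_int diff_gt_0_iff_gt le_of_int_ceiling order_le_less)
    have l1: "lam < 1" unfolding lam_def k_def by linarith
    have ceq: "of_int k *\<^sub>R q + 1 *\<^sub>R p = lam *\<^sub>R q + 0 *\<^sub>R q" unfolding peq lam_def
      by (simp add: algebra_simps)
    have latq: "lattice_point q" and latp: "lattice_point p" using act_lat p q by auto
    have clat: "lattice_point (lam *\<^sub>R q + 0 *\<^sub>R q)"
      using lattice_comb[OF latq latp, of "of_int k" 1] ceq by simp
    have cnz: "lam *\<^sub>R q + 0 *\<^sub>R q \<noteq> 0" using l0 qnz by simp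
    have "inN R (lam *\<^sub>R q + 0 *\<^sub>R q)" by (rule inN_comb[OF inq inq]) (use l0 l1 clat cnz in auto)
    then have "s \<le> H (lam *\<^sub>R q)" using low by simp
    moreover have "H (lam *\<^sub>R q) = lam * s" using hom l0 Hq by simp
    moreover have "lam * s < s" using l1 spos by simp
    ultimately show ?thesis by simp
  qed
qed

end

context comb begin

lemma hull_concl:
  assumes A: "A \<subseteq> Collect act" and z: "0 \<in> convex hull A"
  shows concl
proof -
  obtain T where T: "finite T" "T \<subseteq> A" "card T \<le> DIM(real^2) + 1" "0 \<in> convex hull T"
    using z caratheodory[of A] by blast
  have Tne: "T \<noteq> {}" using T(4) by auto
  obtain a b c where abc: "T = {a, b, c}" using card_le3[OF T(1) Tne] T(3) by auto
  obtain u v w where uvw: "0 \<le> u" "0 \<le> v" "0 \<le> w" "u + v + w = 1" and eq: "u *\<^sub>R a + v *\<^sub>R b + w *\<^sub>R c = 0"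
    using T(4) unfolding abc convex_hull_3 by force
  have acts: "act a" "act b" "act c" using T(2) A abc by auto
  have nz: "a \<noteq> 0" "b \<noteq> 0" "c \<noteq> 0" using acts act_nz by auto
  have z1: "u * a$1 + v * b$1 + w * c$1 = 0" and z2: "u * a$2 + v * b$2 + w * c$2 = 0"
    using eq unfolding vec2_eq by simp_all
  define d1 where "d1 = det2 b c"
  define d2 where "d2 = det2 c a"
  define d3 where "d3 = det2 a b"
  have "v * d1 - u * d2 = c$2 * (u * a$1 + v * b$1 + w * c$1) - c$1 * (u * a$2 + v * b$2 + w * c$2)"
    unfolding d1_def d2_def det2_def by (simp add: algebra_simps)
  then have r1: "v * d1 = u * d2" using z1 z2 by simp
  have "v * d3 - w * d2 = a$1 * (u * a$2 + v * b$2 + w * c$2) - a$2 * (u * a$1 + v * b$1 + w * c$1)"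
    unfolding d3_def d2_def det2_def by (simp add: algebra_simps)
  then have r2: "v * d3 = w * d2" using z1 z2 by simp
  have "w * d1 - u * d3 = b$1 * (u * a$2 + v * b$2 + w * c$2) - b$2 * (u * a$1 + v * b$1 + w * c$1)"
    unfolding d1_def d3_def det2_def by (simp add: algebra_simps)
  then have r3: "w * d1 = u * d3" using z1 z2 by simp
  have sg: "(0 \<le> d1 \<and> 0 \<le> d2 \<and> 0 \<le> d3) \<or> (d1 \<le> 0 \<and> d2 \<le> 0 \<and> d3 \<le> 0)"
    by (rule sign3[OF uvw r1 r2 r3])
  show ?thesis
  proof (cases "d1 + d2 + d3 = 0")
    case False
    show ?thesis
    proof (cases "0 \<le> d1 \<and> 0 \<le> d2 \<and> 0 \<le> d3")
      case True
      then have "0 < d1 + d2 + d3" using False by linarith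
      then show ?thesis using descent[OF acts] True unfolding d1_def d2_def d3_def by blast
    next
      case F2: False
      then have neg: "d1 \<le> 0" "d2 \<le> 0" "d3 \<le> 0" using sg by auto
      then have "d1 + d2 + d3 < 0" using False by linarith
      moreover have "det2 a c = - d2" "det2 c b = - d1" "det2 b a = - d3"
        unfolding d1_def d2_def d3_def by (rule det2_anti)+
      ultimately show ?thesis using descent[OF acts(2,1,3)] neg by simp
    qed
  next
    case True
    then have d0: "d1 = 0" "d2 = 0" "d3 = 0" using sg by auto
    have dac: "det2 a c = 0" using d0(2) det2_anti[of a c] unfolding d2_def by simp
    have ia: "u * (a \<bullet> a) + v * (a \<bullet> b) + w * (a \<bullet> c) = 0"
    proof -
      have "a \<bullet> (u *\<^sub>R a + v *\<^sub>R b + w *\<^sub>R c) = 0" using eq by simp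
      then show ?thesis by (simp add: inner_add_right)
    qed
    show ?thesis
    proof (cases "u = 0")
      case False
      then have "0 < u * (a \<bullet> a)" using uvw nz by simp
      then have "v * (a \<bullet> b) + w * (a \<bullet> c) < 0" using ia by linarith
      then have "a \<bullet> b < 0 \<or> a \<bullet> c < 0"
        using uvw by (smt (verit) mult_nonneg_nonneg)
      then show ?thesis
      proof
        assume "a \<bullet> b < 0" then show ?thesis using pair[OF acts(1,2)] d0(3) unfolding d3_def by simp
      next
        assume "a \<bullet> c < 0" then show ?thesis using pair[OF acts(1,3)] dac by simp
      qed
    next
      case True
      have ib: "v * (b \<bullet> b) + w * (b \<bullet> c) = 0"
      proof -
        have "b \<bullet> (u *\<^sub>R a + v *\<^sub>R b + w *\<^sub>R c) = 0" using eq by simp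
        then show ?thesis using True by (simp add: inner_add_right)
      qed
      show ?thesis
      proof (cases "v = 0")
        case True
        then have "w = 1" using uvw \<open>u = 0\<close> by simp
        then have "c = 0" using eq \<open>u = 0\<close> True by simp
        then show ?thesis using nz by simp
      next
        case False
        then have "0 < v * (b \<bullet> b)" using uvw nz by simp
        then have "w * (b \<bullet> c) < 0" using ib by linarith
        then have "b \<bullet> c < 0" using uvw by (smt (verit) mult_nonneg_nonneg)
        then show ?thesis using pair[OF acts(2,3)] d0(1) unfolding d1_def by simp
      qed
    qed
  qed
qed

end

lemma limit_pt:
  fixes X :: "nat \<Rightarrow> real^2" and h :: "real^2 \<Rightarrow> real" and c :: "nat \<Rightarrow> real"
  assumes K: "\<forall>n. X n \<in> cbox lo hi"
    and ev: "\<forall>a\<in>Q. \<exists>n0. \<forall>n\<ge>n0. h a + c n \<le> a \<bullet> X n"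
    and lim: "c \<longlonglongrightarrow> c0"
  shows "\<exists>x. \<forall>a\<in>Q. h a + c0 \<le> a \<bullet> x"
proof -
  have "seq_compact (cbox lo hi)" by (rule compact_imp_seq_compact) simp
  then obtain l r where r: "strict_mono r" and conv: "(X \<circ> r) \<longlonglongrightarrow> l"
    using K by (metis seq_compactE)
  have "h a + c0 \<le> a \<bullet> l" if a: "a \<in> Q" for a
  proof -
    obtain n0 where n0: "\<forall>n\<ge>n0. h a + c n \<le> a \<bullet> X n" using ev a by blast
    have t1: "(\<lambda>n. h a + c (r n)) \<longlonglongrightarrow> h a + c0"
      using LIMSEQ_subseq_LIMSEQ[OF lim r] by (intro tendsto_add) (auto simp: o_def)
    have t2: "(\<lambda>n. a \<bullet> X (r n)) \<longlonglongrightarrow> a \<bullet> l"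
      using conv by (intro tendsto_inner) (auto simp: o_def)
    have "\<forall>n\<ge>n0. h a + c (r n) \<le> a \<bullet> X (r n)"
      using n0 seq_suble[OF r] by (meson order_trans)
    then show ?thesis using LIMSEQ_le[OF t1 t2] by blast
  qed
  then show ?thesis by blast
qed

definition e1 :: "real^2" where "e1 = vector [1, 0]"
definition e2 :: "real^2" where "e2 = vector [0, 1]"

lemma e_inner: "e1 \<bullet> x = x$1" "e2 \<bullet> x = x$2" "(-e1) \<bullet> x = - x$1" "(-e2) \<bullet> x = - x$2"
  by (simp_all add: e1_def e2_def inner2)

lemma e_inN: "1 \<le> R \<Longrightarrow> inN R e1 \<and> inN R (-e1) \<and> inN R e2 \<and> inN R (-e2)"
  by (simp add: inN_def e1_def e2_def lattice_point2 vec2_eq)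

definition TT :: "(real^2 \<Rightarrow> real) \<Rightarrow> (real^2) set \<Rightarrow> real set" where
  "TT h N = {s. \<exists>x. \<forall>a\<in>N. h a + s \<le> a \<bullet> x}"

lemma TT_box:
  assumes "\<forall>a\<in>N. h a + s \<le> a \<bullet> x" "0 \<le> s" "e1 \<in> N" "-e1 \<in> N" "e2 \<in> N" "-e2 \<in> N"
  shows "x \<in> cbox (vector [h e1, h e2]) (vector [- h (-e1), - h (-e2)])"
proof -
  have "h e1 + s \<le> x$1" "h (-e1) + s \<le> - x$1" "h e2 + s \<le> x$2" "h (-e2) + s \<le> - x$2"
    using assms e_inner by force+
  then show ?thesis unfolding mem_box_cart forall_2 using assms(2) by simp
qed

lemma TT_bdd:
  assumes "e1 \<in> N" "-e1 \<in> N"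
  shows "bdd_above (TT h N)"
proof (rule bdd_aboveI)
  fix s assume "s \<in> TT h N"
  then obtain x where x: "\<forall>a\<in>N. h a + s \<le> a \<bullet> x" unfolding TT_def by blast
  have "h e1 + s \<le> x$1" "h (-e1) + s \<le> - x$1" using x assms e_inner by force+
  then show "s \<le> - (h e1 + h (-e1)) / 2" by simp
qed

lemma TT_anti: "N \<subseteq> M \<Longrightarrow> TT h M \<subseteq> TT h N"
  unfolding TT_def by blast

lemma TT_down: "s \<in> TT h N \<Longrightarrow> t \<le> s \<Longrightarrow> t \<in> TT h N"
  unfolding TT_def by (smt (verit) mem_Collect_eq)

lemma Sup_attained:
  assumes e: "e1 \<in> N" "-e1 \<in> N" "e2 \<in> N" "-e2 \<in> N"
    and s0: "s0 \<in> TT h N" "0 < s0"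
  shows "Sup (TT h N) \<in> TT h N"
proof -
  define \<sigma> where "\<sigma> = Sup (TT h N)"
  have bdd: "bdd_above (TT h N)" by (rule TT_bdd[OF e(1,2)])
  have ne: "TT h N \<noteq> {}" using s0 by blast
  have "\<exists>x. (\<forall>a\<in>N. h a + (\<sigma> - inverse (real (Suc n))) \<le> a \<bullet> x) \<and> x \<in> cbox (vector [h e1, h e2]) (vector [- h (-e1), - h (-e2)])" for n
  proof -
    have "\<sigma> - inverse (real (Suc n)) < \<sigma>" by simp
    then obtain s where s: "s \<in> TT h N" "\<sigma> - inverse (real (Suc n)) < s"
      using less_cSupE[of _ "TT h N"] ne \<sigma>_def by metis
    define s' where "s' = max s s0"
    have s': "s' \<in> TT h N" using s s0 unfolding s'_def by (simp add: max_def)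
    then obtain x where x: "\<forall>a\<in>N. h a + s' \<le> a \<bullet> x" unfolding TT_def by blast
    have "\<forall>a\<in>N. h a + (\<sigma> - inverse (real (Suc n))) \<le> a \<bullet> x"
      using x s(2) unfolding s'_def by (smt (verit) max.cobounded1)
    moreover have "x \<in> cbox (vector [h e1, h e2]) (vector [- h (-e1), - h (-e2)])"
      by (rule TT_box[OF x _ e]) (use s0 s'_def in auto)
    ultimately show ?thesis by blast
  qed
  then obtain X where X: "\<And>n. (\<forall>a\<in>N. h a + (\<sigma> - inverse (real (Suc n))) \<le> a \<bullet> X n)"
    "\<And>n. X n \<in> cbox (vector [h e1, h e2]) (vector [- h (-e1), - h (-e2)])"
    by metis
  have lim: "(\<lambda>n. \<sigma> - inverse (real (Suc n))) \<longlonglongrightarrow> \<sigma> - 0"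
    by (intro tendsto_diff tendsto_const LIMSEQ_inverse_real_of_nat)
  have "\<exists>x. \<forall>a\<in>N. h a + (\<sigma> - 0) \<le> a \<bullet> x"
    by (rule limit_pt[where X = X and c = "\<lambda>n. \<sigma> - inverse (real (Suc n))", OF _ _ lim]) (use X in auto)
  then show ?thesis unfolding TT_def \<sigma>_def by simp
qed


lemma Ints_floor_eq: "x \<in> \<int> \<Longrightarrow> of_int \<lfloor>x\<rfloor> = (x::real)"
  by (metis Ints_cases floor_of_int)

lemma finite_inN: "finite {a. inN R a}"
proof -
  define M where "M = \<lceil>R\<rceil>"
  have "{a. inN R a} \<subseteq> (\<lambda>(i, j). vector [of_int i, of_int j] :: real^2) ` ({-M..M} \<times> {-M..M})"
  proof
    fix a assume "a \<in> {a. inN R a}"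
    then have a: "a$1 \<in> \<int>" "a$2 \<in> \<int>" "\<bar>a$1\<bar> \<le> R" "\<bar>a$2\<bar> \<le> R"
      unfolding inN_def lattice_point2 by auto
    have "a = vector [of_int \<lfloor>a$1\<rfloor>, of_int \<lfloor>a$2\<rfloor>]"
      unfolding vec2_eq using a Ints_floor_eq by simp
    moreover have "\<lfloor>a$1\<rfloor> \<in> {-M..M}" "\<lfloor>a$2\<rfloor> \<in> {-M..M}"
      using a unfolding M_def by (auto simp: abs_le_iff) linarith+
    ultimately show "a \<in> (\<lambda>(i, j). vector [of_int i, of_int j] :: real^2) ` ({-M..M} \<times> {-M..M})"
      by force
  qed
  then show ?thesis by (rule finite_subset) simp
qed

locale poly =
  fixes V :: "(real^2) set"
  assumes finV: "finite V" and neV: "V \<noteq> {}" and latV: "\<forall>v\<in>V. lattice_point v"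
begin

definition h where "h a = support_min (convex hull V) a"

lemma h_attain: "\<exists>v\<in>V. h a = a \<bullet> v"
  unfolding h_def by (rule support_min_hull(1)[OF finV neV])

lemma h_le: "y \<in> convex hull V \<Longrightarrow> h a \<le> a \<bullet> y"
  unfolding h_def using support_min_hull(2)[OF finV neV, of a] by (rule bspec)

lemma h_leV: "v \<in> V \<Longrightarrow> h a \<le> a \<bullet> v"
  by (rule h_le[OF hull_inc])

lemma h_hom: "0 \<le> t \<Longrightarrow> h (t *\<^sub>R a) = t * h a"
proof -
  assume t: "0 \<le> t"
  obtain v where v: "v \<in> V" "h a = a \<bullet> v" using h_attain by blast
  obtain w where w: "w \<in> V" "h (t *\<^sub>R a) = (t *\<^sub>R a) \<bullet> w" using h_attain by blast
  have A: "h (t *\<^sub>R a) \<le> t * h a" using h_leV[OF v(1), of "t *\<^sub>R a"] v(2) by simp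
  have B: "t * h a \<le> h (t *\<^sub>R a)"
  proof -
    have "t * h a \<le> t * (a \<bullet> w)" using h_leV[OF w(1), of a] t by (simp add: mult_left_mono)
    then show ?thesis using w(2) by simp
  qed
  show ?thesis using A B by linarith
qed

lemma h_super: "h a + h b \<le> h (a + b)"
proof -
  obtain w where w: "w \<in> V" "h (a + b) = (a + b) \<bullet> w" using h_attain by blast
  show ?thesis using h_leV[OF w(1), of a] h_leV[OF w(1), of b] w(2) by (simp add: inner_add_left)
qed

lemma h_int: "lattice_point a \<Longrightarrow> h a \<in> \<int>"
proof -
  assume a: "lattice_point a"
  obtain v where v: "v \<in> V" "h a = a \<bullet> v" using h_attain by blast
  have "lattice_point v" using latV v by blast
  then show ?thesis using a v(2) unfolding inner2 lattice_point2 by simp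
qed

definition G where "G a x = a \<bullet> x - h a"

lemma comb_inst:
  assumes "0 < \<sigma>" "\<And>a. inN R a \<Longrightarrow> \<sigma> \<le> G a x"
  shows "comb (\<lambda>a. G a x) \<sigma> R"
proof
  fix t a assume "0 \<le> (t::real)"
  then show "G (t *\<^sub>R a) x = t * G a x" unfolding G_def using h_hom by (simp add: algebra_simps)
next
  fix a b show "G (a + b) x \<le> G a x + G b x" unfolding G_def using h_super[of a b]
    by (simp add: inner_add_left)
qed (use assms in auto)

end

context poly begin

lemma finite_value:
  fixes R :: real
  assumes R1: "1 \<le> R" and s0: "s0 \<in> TT h {a. inN R a}" "0 < s0"
  shows "2 * Sup (TT h {a. inN R a}) \<in> \<int> \<or> 3 * Sup (TT h {a. inN R a}) \<in> \<int>"
proof -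
  define N where "N = {a. inN R a}"
  define \<sigma> where "\<sigma> = Sup (TT h N)"
  have e: "e1 \<in> N" "-e1 \<in> N" "e2 \<in> N" "-e2 \<in> N" using e_inN[OF R1] N_def by auto
  have finN: "finite N" unfolding N_def by (rule finite_inN)
  have bdd: "bdd_above (TT h N)" by (rule TT_bdd[OF e(1,2)])
  have sT: "\<sigma> \<in> TT h N" unfolding \<sigma>_def by (rule Sup_attained[OF e]) (use s0 N_def in auto)
  have spos: "0 < \<sigma>"
  proof -
    have "s0 \<le> \<sigma>" unfolding \<sigma>_def using cSup_upper[OF _ bdd] s0 N_def by blast
    then show ?thesis using s0 by simp
  qed
  obtain x where x: "\<forall>a\<in>N. h a + \<sigma> \<le> a \<bullet> x" using sT unfolding TT_def by blast
  have Gx: "\<And>a. a \<in> N \<Longrightarrow> \<sigma> \<le> G a x" using x unfolding G_def by fastforce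
  define A where "A = {a\<in>N. G a x = \<sigma>}"
  have claim: "\<exists>a\<in>A. a \<bullet> v \<le> 0" for v
  proof (rule ccontr)
    assume "\<not> (\<exists>a\<in>A. a \<bullet> v \<le> 0)"
    then have pos: "\<And>a. a \<in> A \<Longrightarrow> 0 < a \<bullet> v" by force
    define E where "E a = (if a \<bullet> v < 0 then (G a x - \<sigma>) / (- (a \<bullet> v)) else 1)" for a
    have Epos: "0 < E a" if a: "a \<in> N" for a
    proof (cases "a \<bullet> v < 0")
      case True
      then have "a \<notin> A" using pos by force
      then have "\<sigma> < G a x" using Gx[OF a] a unfolding A_def by force
      then show ?thesis unfolding E_def using True by (simp add: divide_pos_neg)
    qed (simp add: E_def)
    define m where "m = Min (E ` N)"
    have Nne: "N \<noteq> {}" using e by blast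
    have mpos: "0 < m" unfolding m_def using finN Nne Epos by (simp add: Min_gr_iff)
    define \<epsilon> where "\<epsilon> = m / 2"
    have eps: "0 < \<epsilon>" "\<epsilon> < m" using mpos unfolding \<epsilon>_def by auto
    define y where "y = x + \<epsilon> *\<^sub>R v"
    have Gy: "G a y = G a x + \<epsilon> * (a \<bullet> v)" for a
      unfolding G_def y_def by (simp add: inner_add_right algebra_simps)
    have gt: "\<sigma> < G a y" if a: "a \<in> N" for a
    proof (cases "a \<bullet> v < 0")
      case True
      have "m \<le> E a" unfolding m_def by (rule Min_le) (use finN a in auto)
      then have "\<epsilon> < E a" using eps by simp
      then have "\<epsilon> * (- (a \<bullet> v)) < E a * (- (a \<bullet> v))" using True by (simp add: mult_strict_right_mono)
      also have "\<dots> = G a x - \<sigma>" unfolding E_def using True by simp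
      finally show ?thesis unfolding Gy by simp
    next
      case False
      show ?thesis
      proof (cases "a \<in> A")
        case True
        then have "0 < \<epsilon> * (a \<bullet> v)" using pos eps by simp
        then show ?thesis unfolding Gy using True unfolding A_def by simp
      next
        case F2: False
        then have "\<sigma> < G a x" using Gx[OF a] a unfolding A_def by force
        moreover have "0 \<le> \<epsilon> * (a \<bullet> v)" using False eps by simp
        ultimately show ?thesis unfolding Gy by simp
      qed
    qed
    define s' where "s' = Min ((\<lambda>a. G a y) ` N)"
    have s'gt: "\<sigma> < s'" unfolding s'_def using finN Nne gt by (simp add: Min_gr_iff)
    have "s' \<in> TT h N" unfolding TT_def
    proof (intro CollectI exI[of _ y] ballI)
      fix a assume a: "a \<in> N"
      have "s' \<le> G a y" unfolding s'_def using finN a by simp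
      then show "h a + s' \<le> a \<bullet> y" unfolding G_def by simp
    qed
    then have "s' \<le> \<sigma>" unfolding \<sigma>_def using cSup_upper[OF _ bdd] by blast
    then show False using s'gt by simp
  qed
  have finA: "finite A" using finN unfolding A_def by simp
  have zero: "0 \<in> convex hull A"
  proof (rule ccontr)
    assume nz: "0 \<notin> convex hull A"
    have "closed (convex hull A)" using finA by (simp add: compact_imp_closed finite_imp_compact compact_convex_hull)
    then obtain a0 b where ab: "0 < b" "\<forall>y\<in>convex hull A. b < a0 \<bullet> y"
      using separating_hyperplane_closed_0[OF convex_convex_hull _ nz] by blast
    obtain a where a: "a \<in> A" "a \<bullet> a0 \<le> 0" using claim by blast
    have "b < a0 \<bullet> a" using ab(2) hull_inc[OF a(1)] by blast
    then show False using a(2) ab(1) by (simp add: inner_commute)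
  qed
  interpret c: comb "\<lambda>a. G a x" \<sigma> R
    by (rule comb_inst[OF spos]) (use Gx N_def in auto)
  have "A \<subseteq> Collect c.act" unfolding A_def c.act_def N_def by auto
  then have "c.concl" using c.hull_concl zero by blast
  then have "2 * \<sigma> \<in> \<int> \<or> 3 * \<sigma> \<in> \<int>" unfolding c.concl_def c.act_def
  proof (elim disjE exE conjE)
    fix u assume u: "inN R u" "G u x = \<sigma>" "inN R (- u)" "G (- u) x = \<sigma>"
    have "2 * \<sigma> = G u x + G (-u) x" using u by simp
    also have "\<dots> = - (h u + h (-u))" unfolding G_def by simp
    finally have "2 * \<sigma> = - (h u + h (-u))" .
    moreover have "h u \<in> \<int>" "h (-u) \<in> \<int>" using u h_int unfolding inN_def by auto
    ultimately have "2 * \<sigma> \<in> \<int>" by (metis Ints_add Ints_minus)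
    then show ?thesis by simp
  next
    fix a b c assume t: "inN R a" "G a x = \<sigma>" "inN R b" "G b x = \<sigma>" "inN R c" "G c x = \<sigma>" "a + b + c = 0"
    have "3 * \<sigma> = G a x + G b x + G c x" using t by simp
    also have "\<dots> = (a + b + c) \<bullet> x - (h a + h b + h c)" unfolding G_def by (simp add: inner_add_left)
    also have "\<dots> = - (h a + h b + h c)" using t(7) by simp
    finally have "3 * \<sigma> = - (h a + h b + h c)" .
    moreover have "h a \<in> \<int>" "h b \<in> \<int>" "h c \<in> \<int>" using t h_int unfolding inN_def by auto
    ultimately have "3 * \<sigma> \<in> \<int>" by (metis Ints_add Ints_minus)
    then show ?thesis by simp
  qed
  then show ?thesis unfolding \<sigma>_def N_def .
qed

end

lemma lattice_norm_ge1:
  fixes a :: "real^2"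
  assumes "lattice_point a" "a \<noteq> 0"
  shows "1 \<le> norm a"
proof -
  have "a$1 \<noteq> 0 \<or> a$2 \<noteq> 0" using assms(2) unfolding vec2_eq by simp
  then obtain i where i: "a$i \<noteq> 0" by blast
  have "a$i \<in> \<int>" using assms(1) unfolding lattice_point_def by blast
  then obtain n where n: "a$i = of_int n" by (metis Ints_cases)
  then have "n \<noteq> 0" using i by simp
  then have "1 \<le> \<bar>a$i\<bar>" using n by linarith
  then show ?thesis using component_le_norm_cart[of a i] by linarith
qed

context poly begin

lemma S_nonempty:
  assumes ad: "aff_dim (convex hull V) = 2"
  shows "\<exists>x0 r. 0 < r \<and> (\<forall>a. lattice_point a \<and> a \<noteq> 0 \<longrightarrow> h a + r \<le> a \<bullet> x0)"
proof -
  have "affine hull (convex hull V) = UNIV" using ad aff_dim_eq_full[of "convex hull V"] by simp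
  then have ri: "rel_interior (convex hull V) = interior (convex hull V)" by (rule rel_interior_interior)
  have "convex hull V \<noteq> {}" using neV by simp
  then have "rel_interior (convex hull V) \<noteq> {}" using rel_interior_eq_empty[OF convex_convex_hull] by blast
  then obtain x0 where "x0 \<in> interior (convex hull V)" using ri by blast
  then obtain r where r: "0 < r" "cball x0 r \<subseteq> convex hull V" using mem_interior_cball by blast
  have "h a + r \<le> a \<bullet> x0" if a: "lattice_point a" "a \<noteq> 0" for a
  proof -
    have na: "1 \<le> norm a" by (rule lattice_norm_ge1[OF a])
    define y where "y = x0 - (r / norm a) *\<^sub>R a"
    have "dist x0 y = r" unfolding y_def dist_norm using r(1) a(2) by simp
    then have "y \<in> convex hull V" using r(2) by auto
    then have "h a \<le> a \<bullet> y" by (rule h_le)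
    also have "a \<bullet> y = a \<bullet> x0 - (r / norm a) * (a \<bullet> a)" unfolding y_def by (simp add: inner_diff_right)
    also have "(r / norm a) * (a \<bullet> a) = r * norm a" using a(2)
      by (simp add: dot_square_norm power2_eq_square)
    finally have "h a \<le> a \<bullet> x0 - r * norm a" .
    moreover have "r \<le> r * norm a" using na r(1) by simp
    ultimately show ?thesis by simp
  qed
  then show ?thesis using r(1) by blast
qed

end

context poly begin

lemma codegree_in:
  assumes ad: "aff_dim (convex hull V) = 2"
  shows "fine_codegree (convex hull V) \<in> {2 / real k | k :: nat. k > 0} \<union> {3 / real k | k :: nat. k > 0}"
proof -
  define N where "N R = {a. inN (real R) a}" for R :: nat
  define \<sigma> where "\<sigma> R = Sup (TT h (N R))" for R
  define Nall where "Nall = {a. lattice_point a \<and> a \<noteq> (0::real^2)}"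
  obtain x0 r where r: "0 < r" "\<forall>a. lattice_point a \<and> a \<noteq> 0 \<longrightarrow> h a + r \<le> a \<bullet> x0"
    using S_nonempty[OF ad] by blast
  have NsubAll: "N R \<subseteq> Nall" for R unfolding N_def Nall_def inN_def by auto
  have rAll: "r \<in> TT h Nall" unfolding TT_def Nall_def using r(2) by blast
  have rN: "r \<in> TT h (N R)" for R using TT_anti[OF NsubAll] rAll by blast
  have eN: "e1 \<in> N R \<and> -e1 \<in> N R \<and> e2 \<in> N R \<and> -e2 \<in> N R" if "1 \<le> R" for R
    using e_inN[of "real R"] that unfolding N_def by simp
  have bddN: "bdd_above (TT h (N R))" if "1 \<le> R" for R by (rule TT_bdd) (use eN[OF that] in auto)
  have \<sigma>T: "\<sigma> R \<in> TT h (N R)" if "1 \<le> R" for R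
    unfolding \<sigma>_def by (rule Sup_attained[OF _ _ _ _ rN r(1)]) (use eN[OF that] in auto)
  have \<sigma>ge: "r \<le> \<sigma> R" if "1 \<le> R" for R
    unfolding \<sigma>_def using cSup_upper[OF rN bddN[OF that]] .
  have \<sigma>int: "2 * \<sigma> R \<in> \<int> \<or> 3 * \<sigma> R \<in> \<int>" if "1 \<le> R" for R
    unfolding \<sigma>_def N_def by (rule finite_value[OF _ rN[unfolded N_def] r(1)]) (use that in simp)
  have \<sigma>6: "6 * \<sigma> R \<in> \<int>" if "1 \<le> R" for R
  proof -
    have "6 * \<sigma> R = 3 * (2 * \<sigma> R)" "6 * \<sigma> R = 2 * (3 * \<sigma> R)" by simp_all
    then show ?thesis using \<sigma>int[OF that] by (metis Ints_mult Ints_numeral)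
  qed
  have mono: "\<sigma> R' \<le> \<sigma> R" if "1 \<le> R" "R \<le> R'" for R R'
  proof -
    have "N R \<subseteq> N R'" unfolding N_def inN_def using that by auto
    then have "TT h (N R') \<subseteq> TT h (N R)" by (rule TT_anti)
    then show ?thesis unfolding \<sigma>_def using cSup_subset_mono[OF _ bddN[OF that(1)]] rN by blast
  qed
  obtain R0 where R0: "1 \<le> R0" "\<forall>R. 1 \<le> R \<longrightarrow> nat \<lfloor>6 * \<sigma> R0\<rfloor> \<le> nat \<lfloor>6 * \<sigma> R\<rfloor>"
    using ex_has_least_nat[of "\<lambda>R. 1 \<le> R" 1 "\<lambda>R. nat \<lfloor>6 * \<sigma> R\<rfloor>"] by auto
  define L where "L = \<sigma> R0"
  have Lpos: "0 < L" unfolding L_def using \<sigma>ge[OF R0(1)] r(1) by simp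
  have const: "\<sigma> R = L" if "R0 \<le> R" for R
  proof -
    have R1: "1 \<le> R" using that R0(1) by simp
    have a: "\<sigma> R \<le> L" unfolding L_def using mono[OF R0(1) that] .
    have p1: "0 < \<sigma> R" using \<sigma>ge[OF R1] r(1) by simp
    obtain m where m: "6 * \<sigma> R = of_int m" using \<sigma>6[OF R1] by (metis Ints_cases)
    obtain m0 where m0: "6 * \<sigma> R0 = of_int m0" using \<sigma>6[OF R0(1)] by (metis Ints_cases)
    have "nat m0 \<le> nat m" using R0(2) R1 m m0 by (metis floor_of_int)
    moreover have "(0::real) < of_int m0" using m0 Lpos unfolding L_def by linarith
    then have "0 < m0" by simp
    ultimately have "m0 \<le> m" by simp
    then have "6 * \<sigma> R0 \<le> 6 * \<sigma> R" using m m0 by simp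
    then show ?thesis using a L_def by simp
  qed
  define lo where "lo = (vector [h e1, h e2] :: real^2)"
  define hi where "hi = (vector [- h (-e1), - h (-e2)] :: real^2)"
  have "\<exists>x. (\<forall>a\<in>N (n + R0). h a + L \<le> a \<bullet> x) \<and> x \<in> cbox lo hi" for n
  proof -
    have R1: "1 \<le> n + R0" using R0(1) by simp
    obtain x where x: "\<forall>a\<in>N (n + R0). h a + L \<le> a \<bullet> x"
      using \<sigma>T[OF R1] const[of "n + R0"] unfolding TT_def by auto
    moreover have "x \<in> cbox lo hi" unfolding lo_def hi_def
      by (rule TT_box[OF x]) (use Lpos eN[OF R1] in auto)
    ultimately show ?thesis by blast
  qed
  then obtain X where X: "\<And>n. \<forall>a\<in>N (n + R0). h a + L \<le> a \<bullet> X n" "\<And>n. X n \<in> cbox lo hi" by metis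
  have "\<exists>x. \<forall>a\<in>Nall. h a + L \<le> a \<bullet> x"
  proof (rule limit_pt[where X = X and c = "\<lambda>n. L" and lo = lo and hi = hi])
    show "\<forall>n. X n \<in> cbox lo hi" using X(2) by blast
    show "(\<lambda>n. L) \<longlonglongrightarrow> L" by simp
    show "\<forall>a\<in>Nall. \<exists>n0. \<forall>n\<ge>n0. h a + L \<le> a \<bullet> X n"
    proof
      fix a assume a: "a \<in> Nall"
      define n0 where "n0 = nat \<lceil>\<bar>a$1\<bar> + \<bar>a$2\<bar>\<rceil>"
      have "h a + L \<le> a \<bullet> X n" if "n0 \<le> n" for n
      proof -
        have "\<bar>a$1\<bar> + \<bar>a$2\<bar> \<le> real n0" unfolding n0_def by linarith
        moreover have "real n0 \<le> real (n + R0)" using that by simp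
        moreover have "0 \<le> \<bar>a$1\<bar>" "0 \<le> \<bar>a$2\<bar>" by simp_all
        ultimately have "\<bar>a$1\<bar> \<le> real (n + R0)" "\<bar>a$2\<bar> \<le> real (n + R0)" by linarith+
        then have "a \<in> N (n + R0)" using a unfolding N_def Nall_def inN_def by simp
        then show ?thesis using X(1) by blast
      qed
      then show "\<exists>n0. \<forall>n\<ge>n0. h a + L \<le> a \<bullet> X n" by blast
    qed
  qed
  then obtain x where x: "\<forall>a\<in>Nall. h a + L \<le> a \<bullet> x" by blast
  define S where "S = {s. s > 0 \<and> fine_adjoint (convex hull V) s \<noteq> {}}"
  have LS: "L \<in> S"
  proof -
    have "x \<in> fine_adjoint (convex hull V) L"
      unfolding fine_adjoint_def using x unfolding Nall_def h_def by auto
    then show ?thesis unfolding S_def using Lpos by blast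
  qed
  have Sle: "s \<le> L" if s: "s \<in> S" for s
  proof -
    obtain y where "y \<in> fine_adjoint (convex hull V) s" using s unfolding S_def by blast
    then have "s \<in> TT h Nall" unfolding TT_def fine_adjoint_def Nall_def h_def by auto
    then have "s \<in> TT h (N R0)" using TT_anti[OF NsubAll] by blast
    then show ?thesis unfolding L_def \<sigma>_def using cSup_upper[OF _ bddN[OF R0(1)]] by blast
  qed
  have SupS: "Sup S = L" by (rule cSup_eq_maximum[OF LS Sle])
  have fc: "fine_codegree (convex hull V) = inverse L"
    unfolding fine_codegree_def using SupS unfolding S_def by simp
  show ?thesis using \<sigma>int[OF R0(1)] unfolding L_def[symmetric]
  proof
    assume "2 * L \<in> \<int>"
    then obtain k where k: "2 * L = of_int k" by (metis Ints_cases)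
    have "(0::real) < of_int k" using k Lpos by linarith
    then have kpos: "0 < k" by simp
    have "fine_codegree (convex hull V) = 2 / real (nat k)" unfolding fc using k kpos
      by (simp add: field_simps)
    then have "\<exists>j::nat. fine_codegree (convex hull V) = 2 / real j \<and> j > 0" using kpos by (intro exI[of _ "nat k"]) simp
    then show ?thesis by blast
  next
    assume "3 * L \<in> \<int>"
    then obtain k where k: "3 * L = of_int k" by (metis Ints_cases)
    have "(0::real) < of_int k" using k Lpos by linarith
    then have kpos: "0 < k" by simp
    have "fine_codegree (convex hull V) = 3 / real (nat k)" unfolding fc using k kpos
      by (simp add: field_simps)
    then have "\<exists>j::nat. fine_codegree (convex hull V) = 3 / real j \<and> j > 0" using kpos by (intro exI[of _ "nat k"]) simp
    then show ?thesis by blast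
  qed
qed

end

context poly begin

lemma codegree_eq:
  assumes Lpos: "0 < L"
    and x: "\<forall>a. lattice_point a \<and> a \<noteq> 0 \<longrightarrow> h a + L \<le> a \<bullet> x"
    and up: "\<And>s y. 0 < s \<Longrightarrow> (\<forall>a. lattice_point a \<and> a \<noteq> 0 \<longrightarrow> h a + s \<le> a \<bullet> y) \<Longrightarrow> s \<le> L"
  shows "fine_codegree (convex hull V) = inverse L"
proof -
  define S where "S = {s. s > 0 \<and> fine_adjoint (convex hull V) s \<noteq> {}}"
  have LS: "L \<in> S"
  proof -
    have "x \<in> fine_adjoint (convex hull V) L" unfolding fine_adjoint_def using x unfolding h_def by auto
    then show ?thesis unfolding S_def using Lpos by blast
  qed
  have Sle: "s \<le> L" if s: "s \<in> S" for s
  proof -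
    obtain y where y: "y \<in> fine_adjoint (convex hull V) s" using s unfolding S_def by blast
    show ?thesis by (rule up[of s y]) (use s y in \<open>auto simp: S_def fine_adjoint_def h_def\<close>)
  qed
  have "Sup S = L" by (rule cSup_eq_maximum[OF LS Sle])
  then show ?thesis unfolding fine_codegree_def S_def by simp
qed

end

lemma lattice_ints:
  assumes "lattice_point (a::real^2)" "a \<noteq> 0"
  obtains m1 m2 :: int where "a$1 = of_int m1" "a$2 = of_int m2" "m1 \<noteq> 0 \<or> m2 \<noteq> 0"
proof -
  obtain m1 where m1: "a$1 = of_int m1" using assms(1) unfolding lattice_point2 by (metis Ints_cases)
  obtain m2 where m2: "a$2 = of_int m2" using assms(1) unfolding lattice_point2 by (metis Ints_cases)
  have "m1 \<noteq> 0 \<or> m2 \<noteq> 0" using assms(2) m1 m2 unfolding vec2_eq by auto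
  then show ?thesis using that m1 m2 by blast
qed

definition vtri :: "nat \<Rightarrow> (real^2) set" where
  "vtri k = {0, vector [real k, 0], vector [0, real k]}"
definition vsq :: "nat \<Rightarrow> (real^2) set" where
  "vsq k = {0, vector [real k, 0], vector [0, real k], vector [real k, real k]}"

lemma poly_tri: "poly (vtri k)"
  by unfold_locales (auto simp: vtri_def lattice_point2)
lemma poly_sq: "poly (vsq k)"
  by unfold_locales (auto simp: vsq_def lattice_point2)

lemma tri_interior:
  assumes k: "0 < k"
  shows "interior (convex hull (vtri k)) \<noteq> {}"
proof -
  define c :: "real^2" where "c = vector [real k / 4, real k / 4]"
  have "ball c (real k / 8) \<subseteq> convex hull (vtri k)"
  proof
    fix y assume "y \<in> ball c (real k / 8)"
    then have d: "norm (y - c) < real k / 8" by (simp add: dist_norm norm_minus_commute)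
    have "\<bar>(y - c)$1\<bar> < real k / 8" "\<bar>(y - c)$2\<bar> < real k / 8"
      using component_le_norm_cart[of "y - c"] d by (meson le_less_trans)+
    then have "\<bar>y$1 - real k / 4\<bar> < real k / 8" "\<bar>y$2 - real k / 4\<bar> < real k / 8"
      unfolding c_def by simp_all
    then have "y$1 - real k / 4 < real k / 8 \<and> - (y$1 - real k / 4) < real k / 8"
      "y$2 - real k / 4 < real k / 8 \<and> - (y$2 - real k / 4) < real k / 8"
      by (simp_all only: abs_less_iff)
    then have y: "real k / 8 < y$1" "y$1 < 3 * real k / 8" "real k / 8 < y$2" "y$2 < 3 * real k / 8"
      by linarith+
    define v where "v = y$1 / real k"
    define w where "w = y$2 / real k"
    define u where "u = 1 - v - w"
    have kk: "0 < real k" using k by simp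
    have s: "y$1 + y$2 \<le> real k" using y by linarith
    have vw1: "v + w = (y$1 + y$2) / real k" unfolding v_def w_def by (simp add: add_divide_distrib)
    have vw2: "(y$1 + y$2) / real k \<le> 1" using s kk by (simp add: divide_le_eq)
    have v0: "0 \<le> v" "0 \<le> w" unfolding v_def w_def using y kk by simp_all
    have u0: "0 \<le> u" unfolding u_def using vw1 vw2 by linarith
    have vw: "0 \<le> v" "0 \<le> w" "0 \<le> u" "u + v + w = 1" using v0 u0 unfolding u_def by auto
    have "y = u *\<^sub>R 0 + v *\<^sub>R vector [real k, 0] + w *\<^sub>R vector [0, real k]"
      unfolding vec2_eq v_def w_def using kk by simp
    then show "y \<in> convex hull (vtri k)" unfolding vtri_def convex_hull_3 using vw by blast
  qed
  moreover have "c \<in> interior (ball c (real k / 8))" using k by simp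
  ultimately have "c \<in> interior (convex hull (vtri k))" using interior_mono by blast
  then show ?thesis by blast
qed

lemma tri_sub_sq: "convex hull (vtri k) \<subseteq> convex hull (vsq k)"
  by (rule hull_mono) (auto simp: vtri_def vsq_def)

lemma aff_tri: "0 < k \<Longrightarrow> aff_dim (convex hull (vtri k)) = int CARD(2)"
  using aff_dim_nonempty_interior[OF tri_interior] by simp

lemma aff_sq: "0 < k \<Longrightarrow> aff_dim (convex hull (vsq k)) = int CARD(2)"
proof -
  assume k: "0 < k"
  have "interior (convex hull (vsq k)) \<noteq> {}"
    using tri_interior[OF k] interior_mono[OF tri_sub_sq] by blast
  then show ?thesis using aff_dim_nonempty_interior[of "convex hull (vsq k)"] by simp
qed


lemma tri_codegree:
  assumes k: "0 < k"
  shows "fine_codegree (convex hull (vtri k)) = 3 / real k"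
proof -
  interpret t: poly "vtri k" by (rule poly_tri)
  have kk: "0 < real k" using k by simp
  define x :: "real^2" where "x = vector [real k / 3, real k / 3]"
  have mem: "0 \<in> vtri k" "vector [real k, 0] \<in> vtri k" "vector [0, real k] \<in> vtri k"
    unfolding vtri_def by auto
  have low: "t.h a + real k / 3 \<le> a \<bullet> x" if a: "lattice_point a" "a \<noteq> 0" for a
  proof -
    obtain m1 m2 where m: "a$1 = of_int m1" "a$2 = of_int m2" "m1 \<noteq> 0 \<or> m2 \<noteq> 0"
      using lattice_ints[OF a] by blast
    define p1 where "p1 = real k * of_int m1"
    define p2 where "p2 = real k * of_int m2"
    have ax: "a \<bullet> x = (p1 + p2) / 3" unfolding x_def p1_def p2_def inner2 using m by (simp add: algebra_simps)
    have h0: "t.h a \<le> 0" using t.h_leV[OF mem(1), of a] by simp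
    have h1: "t.h a \<le> p1" using t.h_leV[OF mem(2), of a] unfolding p1_def inner2 using m by (simp add: algebra_simps)
    have h2: "t.h a \<le> p2" using t.h_leV[OF mem(3), of a] unfolding p2_def inner2 using m by (simp add: algebra_simps)
    have "m1 + m2 \<ge> 1 \<or> m2 - 2 * m1 \<ge> 1 \<or> m1 - 2 * m2 \<ge> 1" using m(3) by linarith
    then show ?thesis
    proof (elim disjE)
      assume c: "m1 + m2 \<ge> 1"
      have "real k * 1 \<le> real k * of_int (m1 + m2)" using c kk by (intro mult_left_mono) simp_all
      then have "real k \<le> p1 + p2" unfolding p1_def p2_def by (simp add: algebra_simps)
      then show ?thesis unfolding ax using h0 by (simp add: field_simps)
    next
      assume c: "m2 - 2 * m1 \<ge> 1"
      have "real k * 1 \<le> real k * of_int (m2 - 2 * m1)" using c kk by (intro mult_left_mono) simp_all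
      then have "real k \<le> p2 - 2 * p1" unfolding p1_def p2_def by (simp add: algebra_simps)
      then show ?thesis unfolding ax using h1 by (simp add: field_simps)
    next
      assume c: "m1 - 2 * m2 \<ge> 1"
      have "real k * 1 \<le> real k * of_int (m1 - 2 * m2)" using c kk by (intro mult_left_mono) simp_all
      then have "real k \<le> p1 - 2 * p2" unfolding p1_def p2_def by (simp add: algebra_simps)
      then show ?thesis unfolding ax using h2 by (simp add: field_simps)
    qed
  qed
  have up: "s \<le> real k / 3" if s: "\<forall>a. lattice_point a \<and> a \<noteq> 0 \<longrightarrow> t.h a + s \<le> a \<bullet> y" for s y
  proof -
    define w :: "real^2" where "w = vector [-1, -1]"
    have lat: "lattice_point e1" "e1 \<noteq> 0" "lattice_point e2" "e2 \<noteq> 0" "lattice_point w" "w \<noteq> 0"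
      unfolding e1_def e2_def w_def by (auto simp: lattice_point2 vec2_eq)
    have i1: "t.h e1 + s \<le> y$1" using s lat e_inner by force
    have i2: "t.h e2 + s \<le> y$2" using s lat e_inner by force
    have i3: "t.h w + s \<le> - y$1 - y$2" using s lat unfolding w_def inner2 by force
    obtain v1 where v1: "v1 \<in> vtri k" "t.h e1 = e1 \<bullet> v1" using t.h_attain by blast
    obtain v2 where v2: "v2 \<in> vtri k" "t.h e2 = e2 \<bullet> v2" using t.h_attain by blast
    obtain v3 where v3: "v3 \<in> vtri k" "t.h w = w \<bullet> v3" using t.h_attain by blast
    have "0 \<le> t.h e1" using v1 unfolding vtri_def e1_def inner2 by auto
    moreover have "0 \<le> t.h e2" using v2 unfolding vtri_def e2_def inner2 by auto
    moreover have "- real k \<le> t.h w" using v3 unfolding vtri_def w_def inner2 by auto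
    ultimately show ?thesis using i1 i2 i3 by linarith
  qed
  have "fine_codegree (convex hull (vtri k)) = inverse (real k / 3)"
    by (rule t.codegree_eq[of _ x]) (use kk low up in auto)
  then show ?thesis by simp
qed

lemma sq_codegree:
  assumes k: "0 < k"
  shows "fine_codegree (convex hull (vsq k)) = 2 / real k"
proof -
  interpret t: poly "vsq k" by (rule poly_sq)
  have kk: "0 < real k" using k by simp
  define x :: "real^2" where "x = vector [real k / 2, real k / 2]"
  have mem: "0 \<in> vsq k" "vector [real k, 0] \<in> vsq k" "vector [0, real k] \<in> vsq k" "vector [real k, real k] \<in> vsq k"
    unfolding vsq_def by auto
  have low: "t.h a + real k / 2 \<le> a \<bullet> x" if a: "lattice_point a" "a \<noteq> 0" for a
  proof -
    obtain m1 m2 where m: "a$1 = of_int m1" "a$2 = of_int m2" "m1 \<noteq> 0 \<or> m2 \<noteq> 0"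
      using lattice_ints[OF a] by blast
    define p1 where "p1 = real k * of_int m1"
    define p2 where "p2 = real k * of_int m2"
    have ax: "a \<bullet> x = (p1 + p2) / 2" unfolding x_def p1_def p2_def inner2 using m by (simp add: algebra_simps)
    have h0: "t.h a \<le> 0" using t.h_leV[OF mem(1), of a] by simp
    have h1: "t.h a \<le> p1" using t.h_leV[OF mem(2), of a] unfolding p1_def inner2 using m by (simp add: algebra_simps)
    have h2: "t.h a \<le> p2" using t.h_leV[OF mem(3), of a] unfolding p2_def inner2 using m by (simp add: algebra_simps)
    have h3: "t.h a \<le> p1 + p2" using t.h_leV[OF mem(4), of a] unfolding p1_def p2_def inner2 using m by (simp add: algebra_simps)
    have "m1 + m2 \<ge> 1 \<or> m2 - m1 \<ge> 1 \<or> m1 - m2 \<ge> 1 \<or> - m1 - m2 \<ge> 1" using m(3) by linarith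
    then show ?thesis
    proof (elim disjE)
      assume c: "m1 + m2 \<ge> 1"
      have "real k * 1 \<le> real k * of_int (m1 + m2)" using c kk by (intro mult_left_mono) simp_all
      then have "real k \<le> p1 + p2" unfolding p1_def p2_def by (simp add: algebra_simps)
      then show ?thesis unfolding ax using h0 by (simp add: field_simps)
    next
      assume c: "m2 - m1 \<ge> 1"
      have "real k * 1 \<le> real k * of_int (m2 - m1)" using c kk by (intro mult_left_mono) simp_all
      then have "real k \<le> p2 - p1" unfolding p1_def p2_def by (simp add: algebra_simps)
      then show ?thesis unfolding ax using h1 by (simp add: field_simps)
    next
      assume c: "m1 - m2 \<ge> 1"
      have "real k * 1 \<le> real k * of_int (m1 - m2)" using c kk by (intro mult_left_mono) simp_all
      then have "real k \<le> p1 - p2" unfolding p1_def p2_def by (simp add: algebra_simps)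
      then show ?thesis unfolding ax using h2 by (simp add: field_simps)
    next
      assume c: "- m1 - m2 \<ge> 1"
      have "real k * 1 \<le> real k * of_int (- m1 - m2)" using c kk by (intro mult_left_mono) simp_all
      then have "real k \<le> - p1 - p2" unfolding p1_def p2_def by (simp add: algebra_simps)
      then show ?thesis unfolding ax using h3 by (simp add: field_simps)
    qed
  qed
  have up: "s \<le> real k / 2" if s: "\<forall>a. lattice_point a \<and> a \<noteq> 0 \<longrightarrow> t.h a + s \<le> a \<bullet> y" for s y
  proof -
    have lat: "lattice_point e1" "e1 \<noteq> 0" "lattice_point (-e1)" "-e1 \<noteq> 0"
      unfolding e1_def by (auto simp: lattice_point2 vec2_eq)
    have i1: "t.h e1 + s \<le> y$1" using s lat e_inner by force
    have i2: "t.h (-e1) + s \<le> - y$1" using s lat e_inner by force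
    obtain v1 where v1: "v1 \<in> vsq k" "t.h e1 = e1 \<bullet> v1" using t.h_attain by blast
    obtain v2 where v2: "v2 \<in> vsq k" "t.h (-e1) = (-e1) \<bullet> v2" using t.h_attain by blast
    have "0 \<le> t.h e1" using v1 unfolding vsq_def e1_def inner2 by auto
    moreover have "- real k \<le> t.h (-e1)" using v2 unfolding vsq_def e1_def inner2 by auto
    ultimately show ?thesis using i1 i2 by linarith
  qed
  have "fine_codegree (convex hull (vsq k)) = inverse (real k / 2)"
    by (rule t.codegree_eq[of _ x]) (use kk low up in auto)
  then show ?thesis by simp
qed

theorem mainTheorem6:
  shows "fine_spectrum TYPE(2) =
           {2 / real k | k :: nat. k > 0} \<union> {3 / real k | k :: nat. k > 0}"
proof
  show "fine_spectrum TYPE(2) \<subseteq> {2 / real k | k :: nat. k > 0} \<union> {3 / real k | k :: nat. k > 0}"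
  proof
    fix m assume "m \<in> fine_spectrum TYPE(2)"
    then obtain P :: "(real^2) set" where P: "m = fine_codegree P" "lattice_polytope P" "aff_dim P = int CARD(2)"
      unfolding fine_spectrum_def by blast
    obtain V where V: "finite V" "V \<noteq> {}" "\<forall>v\<in>V. lattice_point v" "P = convex hull V"
      using P(2) unfolding lattice_polytope_def by blast
    interpret p: poly V using V by unfold_locales auto
    have "aff_dim (convex hull V) = 2" using P(3) V(4) by simp
    then show "m \<in> {2 / real k | k :: nat. k > 0} \<union> {3 / real k | k :: nat. k > 0}"
      using p.codegree_in P(1) V(4) by simp
  qed
next
  show "{2 / real k | k :: nat. k > 0} \<union> {3 / real k | k :: nat. k > 0} \<subseteq> fine_spectrum TYPE(2)"
  proof
    fix m assume "m \<in> {2 / real k | k :: nat. k > 0} \<union> {3 / real k | k :: nat. k > 0}"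
    then show "m \<in> fine_spectrum TYPE(2)"
    proof (elim UnE CollectE exE conjE)
      fix k :: nat assume m: "m = 2 / real k" and k: "0 < k"
      have lp: "lattice_polytope (convex hull (vsq k))" unfolding lattice_polytope_def
        by (rule exI[of _ "vsq k"]) (auto simp: vsq_def lattice_point2)
      show ?thesis unfolding fine_spectrum_def
        by (rule CollectI, rule exI[of _ "convex hull (vsq k)"]) (use lp aff_sq[OF k] sq_codegree[OF k] m in auto)
    next
      fix k :: nat assume m: "m = 3 / real k" and k: "0 < k"
      have lp: "lattice_polytope (convex hull (vtri k))" unfolding lattice_polytope_def
        by (rule exI[of _ "vtri k"]) (auto simp: vtri_def lattice_point2)
      show ?thesis unfolding fine_spectrum_def
        by (rule CollectI, rule exI[of _ "convex hull (vtri k)"]) (use lp aff_tri[OF k] tri_codegree[OF k] m in auto)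
    qed
  qed
qed


end
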